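(* Let $(E\to M,\rho,\langle\cdot,\cdot\rangle,[\cdot,\cdot])$ be a Courant algebroid, $\mathcal{G}$ a generalized metric on $E$ and $D$ a generalized connection on $E$ compatible with $\mathcal{G}$ (i.e. $D\mathcal{G}=0$). Then the total generalized Ricci curvature satisfies $\mathrm{Ric}=\mathrm{Ric}^+_{\mathrm{GF}}+\mathrm{Ric}^-_{\mathrm{GF}}$, i.e. for all $a,b\in\Gamma(E)$, \[\mathrm{Ric}(a,b)=\mathrm{Ric}^+_{\mathrm{GF}}(a_-,b_+)+\mathrm{Ric}^-_{\mathrm{GF}}(a_+,b_-).\]
   Context: A Courant algebroid $(E\to M,\rho,\langle\cdot,\cdot\rangle,[\cdot,\cdot])$ consists of a vector bundle $E$, a nondegenerate symmetric bilinear form, an anchor $\rho:E\to TM$ and a bracket on $\Gamma(E)$ with $[a,[b,c]]=[[a,b],c]+[b,[a,c]]$, $\mathcal{L}_{\rho a}\langle b,c\rangle=\langle[a,b],c\rangle+\langle b,[a,c]\rangle$, $2[a,a]=\rho^*d\langle a,a\rangle$. A generalized connection is a linear $D:\Gamma(E)\to\Gamma(E^*\otimes E)$ with $D(fa)=fDa+\rho^*df\otimes a$ and $\rho^*d\langle a,b\rangle=\langle Da,b\rangle+\langle a,Db\rangle$; $D_ba:=(Da)(b)$. Naive curvature: $\mathcal{R}_0(a,b)c:=D_aD_bc-D_bD_ac-D_{[a,b]}c$. A generalized metric is a self-adjoint $\mathcal{G}\in\operatorname{End}E$ with $\mathcal{G}^2=1$; $V_\pm=\ker(\mathcal{G}\mp1)$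 and $x_\pm:=\tfrac12(1\pm\mathcal{G})x$. $D$ compatible with $\mathcal{G}$ means $D$ preserves $\Gamma(V_\pm)$. The total curvature is $\mathcal{R}(a,b):=\mathcal{R}_0(a_+,b_-)+\mathcal{R}_0(a_-,b_+)\in\operatorname{End}E$, and the total generalized Ricci curvature is $\mathrm{Ric}(a,b):=$ trace of the endomorphism $c\mapsto\mathcal{R}(c,a)b$ of $E$. For compatible $D$, $\mathrm{Ric}^\pm_{\mathrm{GF}}(a_\mp,b_\pm)$ is the trace of the endomorphism $V_\pm\to V_\pm$, $c_\pm\mapsto\mathcal{R}_0(c_\pm,a_\mp)b_\pm$. *)

theory Defs
  imports Main "HOL.Real_Vector_Spaces"
begin

text \<open>Algebraic (Serre--Swan) model of a Courant algebroid.
  The type 'r plays the role of the ring of smooth functions C-infinity(M)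
  (a commutative real algebra), the type 'e plays the role of the space of
  sections Gamma(E), with module action smult.  The anchor is given through
  its action on functions: anchor a f = L_{rho a} f.  Sections form a finitely
  generated projective module (existence of a finite dual basis), the pairing
  is C-infinity(M)-bilinear, symmetric and nondegenerate (it identifies Gamma(E)
  with Gamma(E^*)).\<close>

definition module_ax :: "('r::comm_ring_1 \<Rightarrow> 'e::ab_group_add \<Rightarrow> 'e) \<Rightarrow> bool" where
  "module_ax smult \<longleftrightarrow>
     (\<forall>r x y. smult r (x + y) = smult r x + smult r y) \<and>
     (\<forall>r s x. smult (r + s) x = smult r x + smult s x) \<and>
     (\<forall>r s x. smult (r * s) x = smult r (smult s x)) \<and>
     (\<forall>x. smult 1 x = x)"

definition linear_on :: "('r::comm_ring_1 \<Rightarrow> 'e::ab_group_add \<Rightarrow> 'e) \<Rightarrow> 'e set \<Rightarrow> ('e \<Rightarrow> 'r) \<Rightarrow> bool" where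
  "linear_on smult W \<phi> \<longleftrightarrow>
     (\<forall>r x y. x \<in> W \<longrightarrow> y \<in> W \<longrightarrow> \<phi> (smult r x + y) = r * \<phi> x + \<phi> y)"

definition dual_basis :: "('r::comm_ring_1 \<Rightarrow> 'e::ab_group_add \<Rightarrow> 'e) \<Rightarrow> 'e set \<Rightarrow> nat \<Rightarrow> (nat \<Rightarrow> 'e) \<Rightarrow> (nat \<Rightarrow> 'e \<Rightarrow> 'r) \<Rightarrow> bool" where
  "dual_basis smult W n e \<phi> \<longleftrightarrow>
     (\<forall>i<n. e i \<in> W) \<and> (\<forall>i<n. linear_on smult W (\<phi> i)) \<and>
     (\<forall>x\<in>W. x = (\<Sum>i<n. smult (\<phi> i x) (e i)))"

definition mtrace :: "('r::comm_ring_1 \<Rightarrow> 'e::ab_group_add \<Rightarrow> 'e) \<Rightarrow> 'e set \<Rightarrow> ('e \<Rightarrow> 'e) \<Rightarrow> 'r" where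
  "mtrace smult W T =
     (let (n, e, \<phi>) = (SOME (n, e, \<phi>). dual_basis smult W n e \<phi>)
      in \<Sum>i<n. \<phi> i (T (e i)))"

definition rho_star_d :: "('e \<Rightarrow> 'r \<Rightarrow> 'r) \<Rightarrow> ('e \<Rightarrow> 'e \<Rightarrow> 'r) \<Rightarrow> 'r \<Rightarrow> 'e" where
  "rho_star_d anchor pair f = (THE x. \<forall>y. pair x y = anchor y f)"

definition courant_algebroid ::
  "('r::{comm_ring_1,real_algebra_1} \<Rightarrow> 'e::ab_group_add \<Rightarrow> 'e) \<Rightarrow> ('e \<Rightarrow> 'r \<Rightarrow> 'r) \<Rightarrow>
   ('e \<Rightarrow> 'e \<Rightarrow> 'r) \<Rightarrow> ('e \<Rightarrow> 'e \<Rightarrow> 'e) \<Rightarrow> bool" where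
  "courant_algebroid smult anchor pair br \<longleftrightarrow>
     module_ax smult \<and>
     \<comment> \<open>Gamma(E) finitely generated projective (sections of a vector bundle)\<close>
     (\<exists>n e \<phi>. dual_basis smult UNIV n e \<phi>) \<and>
     \<comment> \<open>anchor: C-infinity(M)-linear in the section, a real-linear derivation on functions\<close>
     (\<forall>r a b f. anchor (smult r a + b) f = r * anchor a f + anchor b f) \<and>
     (\<forall>a f g. anchor a (f + g) = anchor a f + anchor a g) \<and>
     (\<forall>a f g. anchor a (f * g) = f * anchor a g + g * anchor a f) \<and>
     (\<forall>a c f. anchor a (scaleR c f) = scaleR c (anchor a f)) \<and>
     \<comment> \<open>pairing: symmetric, bilinear, nondegenerate\<close>
     (\<forall>a b. pair a b = pair b a) \<and>
     (\<forall>r a b c. pair (smult r a + b) c = r * pair a c + pair b c) \<and>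
     (\<forall>a. (\<forall>b. pair a b = 0) \<longrightarrow> a = 0) \<and>
     (\<forall>\<phi>. linear_on smult UNIV \<phi> \<longrightarrow> (\<exists>a. \<forall>b. pair a b = \<phi> b)) \<and>
     \<comment> \<open>bracket: real-bilinear\<close>
     (\<forall>a b c. br a (b + c) = br a b + br a c) \<and>
     (\<forall>a b c. br (a + b) c = br a c + br b c) \<and>
     (\<forall>a b (c::real). br a (smult (of_real c) b) = smult (of_real c) (br a b)) \<and>
     (\<forall>a b (c::real). br (smult (of_real c) a) b = smult (of_real c) (br a b)) \<and>
     \<comment> \<open>Courant axioms\<close>
     (\<forall>a b c. br a (br b c) = br (br a b) c + br b (br a c)) \<and>
     (\<forall>a b c. anchor a (pair b c) = pair (br a b) c + pair b (br a c)) \<and>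
     (\<forall>a. br a a + br a a = rho_star_d anchor pair (pair a a))"

text \<open>Generalized connection; D b a = D_b a = (Da)(b).\<close>
definition generalized_connection ::
  "('r::{comm_ring_1,real_algebra_1} \<Rightarrow> 'e::ab_group_add \<Rightarrow> 'e) \<Rightarrow> ('e \<Rightarrow> 'r \<Rightarrow> 'r) \<Rightarrow>
   ('e \<Rightarrow> 'e \<Rightarrow> 'r) \<Rightarrow> ('e \<Rightarrow> 'e \<Rightarrow> 'e) \<Rightarrow> bool" where
  "generalized_connection smult anchor pair D \<longleftrightarrow>
     \<comment> \<open>Da is a section of E^* (x) E: C-infinity(M)-linear in the lower slot\<close>
     (\<forall>r b b' a. D (smult r b + b') a = smult r (D b a) + D b' a) \<and>
     \<comment> \<open>D is real-linear\<close>
     (\<forall>b a a'. D b (a + a') = D b a + D b a') \<and>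
     (\<forall>b a (c::real). D b (smult (of_real c) a) = smult (of_real c) (D b a)) \<and>
     \<comment> \<open>Leibniz rule D(fa) = f Da + rho^* df (x) a\<close>
     (\<forall>f a b. D b (smult f a) = smult f (D b a) + smult (pair (rho_star_d anchor pair f) b) a) \<and>
     \<comment> \<open>metric compatibility rho^* d<a,c> = <Da,c> + <a,Dc>\<close>
     (\<forall>a b c. pair (rho_star_d anchor pair (pair a c)) b = pair (D b a) c + pair a (D b c))"

definition generalized_metric ::
  "('r::comm_ring_1 \<Rightarrow> 'e::ab_group_add \<Rightarrow> 'e) \<Rightarrow> ('e \<Rightarrow> 'e \<Rightarrow> 'r) \<Rightarrow> ('e \<Rightarrow> 'e) \<Rightarrow> bool" where
  "generalized_metric smult pair G \<longleftrightarrow>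
     (\<forall>r a b. G (smult r a + b) = smult r (G a) + G b) \<and>
     (\<forall>a b. pair (G a) b = pair a (G b)) \<and>
     (\<forall>a. G (G a) = a)"

definition Vplus :: "('e \<Rightarrow> 'e) \<Rightarrow> 'e set" where
  "Vplus G = {x. G x = x}"

definition Vminus :: "('e::ab_group_add \<Rightarrow> 'e) \<Rightarrow> 'e set" where
  "Vminus G = {x. G x = - x}"

definition ppart :: "('r::real_algebra_1 \<Rightarrow> 'e::ab_group_add \<Rightarrow> 'e) \<Rightarrow> ('e \<Rightarrow> 'e) \<Rightarrow> 'e \<Rightarrow> 'e" where
  "ppart smult G x = smult (of_real (1/2)) (x + G x)"

definition mpart :: "('r::real_algebra_1 \<Rightarrow> 'e::ab_group_add \<Rightarrow> 'e) \<Rightarrow> ('e \<Rightarrow> 'e) \<Rightarrow> 'e \<Rightarrow> 'e" where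
  "mpart smult G x = smult (of_real (1/2)) (x - G x)"

definition compatible :: "('e \<Rightarrow> 'e) \<Rightarrow> ('e \<Rightarrow> 'e \<Rightarrow> 'e::ab_group_add) \<Rightarrow> bool" where
  "compatible G D \<longleftrightarrow>
     (\<forall>a b. b \<in> Vplus G \<longrightarrow> D a b \<in> Vplus G) \<and>
     (\<forall>a b. b \<in> Vminus G \<longrightarrow> D a b \<in> Vminus G)"

definition naive_curv :: "('e \<Rightarrow> 'e \<Rightarrow> 'e) \<Rightarrow> ('e \<Rightarrow> 'e \<Rightarrow> 'e::ab_group_add) \<Rightarrow> 'e \<Rightarrow> 'e \<Rightarrow> 'e \<Rightarrow> 'e" where
  "naive_curv br D a b c = D a (D b c) - D b (D a c) - D (br a b) c"

definition total_curv ::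
  "('r::real_algebra_1 \<Rightarrow> 'e::ab_group_add \<Rightarrow> 'e) \<Rightarrow> ('e \<Rightarrow> 'e \<Rightarrow> 'e) \<Rightarrow> ('e \<Rightarrow> 'e) \<Rightarrow>
   ('e \<Rightarrow> 'e \<Rightarrow> 'e) \<Rightarrow> 'e \<Rightarrow> 'e \<Rightarrow> 'e \<Rightarrow> 'e" where
  "total_curv smult br G D a b c =
     naive_curv br D (ppart smult G a) (mpart smult G b) c +
     naive_curv br D (mpart smult G a) (ppart smult G b) c"

definition total_ric ::
  "('r::{comm_ring_1,real_algebra_1} \<Rightarrow> 'e::ab_group_add \<Rightarrow> 'e) \<Rightarrow> ('e \<Rightarrow> 'e \<Rightarrow> 'e) \<Rightarrow> ('e \<Rightarrow> 'e) \<Rightarrow>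
   ('e \<Rightarrow> 'e \<Rightarrow> 'e) \<Rightarrow> 'e \<Rightarrow> 'e \<Rightarrow> 'r" where
  "total_ric smult br G D a b = mtrace smult UNIV (\<lambda>c. total_curv smult br G D c a b)"

definition ric_GF_plus ::
  "('r::comm_ring_1 \<Rightarrow> 'e::ab_group_add \<Rightarrow> 'e) \<Rightarrow> ('e \<Rightarrow> 'e \<Rightarrow> 'e) \<Rightarrow> ('e \<Rightarrow> 'e) \<Rightarrow>
   ('e \<Rightarrow> 'e \<Rightarrow> 'e) \<Rightarrow> 'e \<Rightarrow> 'e \<Rightarrow> 'r" where
  "ric_GF_plus smult br G D a b = mtrace smult (Vplus G) (\<lambda>c. naive_curv br D c a b)"

definition ric_GF_minus ::
  "('r::comm_ring_1 \<Rightarrow> 'e::ab_group_add \<Rightarrow> 'e) \<Rightarrow> ('e \<Rightarrow> 'e \<Rightarrow> 'e) \<Rightarrow> ('e \<Rightarrow> 'e) \<Rightarrow>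
   ('e \<Rightarrow> 'e \<Rightarrow> 'e) \<Rightarrow> 'e \<Rightarrow> 'e \<Rightarrow> 'r" where
  "ric_GF_minus smult br G D a b = mtrace smult (Vminus G) (\<lambda>c. naive_curv br D c a b)"

end

theory Submission
  imports Defs
begin


lemma sum_split_add: "(\<Sum>i<n+(k::nat). g i) = (\<Sum>i<n. g i) + (\<Sum>i<k. g (n+i))"
  by (induction k) (simp_all add: add.assoc)

definition submod :: "('r::comm_ring_1 \<Rightarrow> 'e::ab_group_add \<Rightarrow> 'e) \<Rightarrow> 'e set \<Rightarrow> bool" where
  "submod smult W \<longleftrightarrow> 0 \<in> W \<and> (\<forall>r x y. x \<in> W \<longrightarrow> y \<in> W \<longrightarrow> smult r x + y \<in> W)"

definition linmap :: "('r::comm_ring_1 \<Rightarrow> 'e::ab_group_add \<Rightarrow> 'e) \<Rightarrow> 'e set \<Rightarrow> ('e \<Rightarrow> 'e) \<Rightarrow> bool" where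
  "linmap smult W T \<longleftrightarrow> (\<forall>r x y. x \<in> W \<longrightarrow> y \<in> W \<longrightarrow> T (smult r x + y) = smult r (T x) + T y)"

lemma self_add0: "(a::'a::ab_group_add) = a + a \<Longrightarrow> a = 0"
  by (metis add_cancel_right_right)

locale md =
  fixes smult :: "'r::comm_ring_1 \<Rightarrow> 'e::ab_group_add \<Rightarrow> 'e"
  assumes mod: "module_ax smult"
begin

lemma sm_add: "smult r (x + y) = smult r x + smult r y"
  and sm_addl: "smult (r + s) x = smult r x + smult s x"
  and sm_mult: "smult (r * s) x = smult r (smult s x)"
  and sm_one[simp]: "smult 1 x = x"
  using mod unfolding module_ax_def by blast+

lemma sm_zero_r[simp]: "smult r 0 = 0"
proof -
  have "smult r (0 + 0) = smult r 0 + smult r 0" by (rule sm_add)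
  then show ?thesis by (intro self_add0) (simp only: add_0_left)
qed

lemma sm_zero_l[simp]: "smult 0 x = 0"
proof -
  have "smult (0 + 0) x = smult 0 x + smult 0 x" by (rule sm_addl)
  then show ?thesis by (intro self_add0) (simp only: add_0_left)
qed

lemma sm_minus: "smult r (- x) = - smult r x"
proof -
  have "smult r (x + - x) = smult r x + smult r (- x)" by (rule sm_add)
  then have "smult r x + smult r (- x) = 0" by simp
  then show ?thesis by (metis add.commute eq_neg_iff_add_eq_0)
qed

lemma sm_diff: "smult r (x - y) = smult r x - smult r y"
  unfolding diff_conv_add_uminus by (simp only: sm_add sm_minus)

lemma sm_uminus_l: "smult (- r) x = - smult r x"
proof -
  have "smult (r + - r) x = smult r x + smult (- r) x" by (rule sm_addl)
  then have "smult r x + smult (- r) x = 0" by simp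
  then show ?thesis by (metis add.commute eq_neg_iff_add_eq_0)
qed

lemma sm_comm: "smult r (smult s x) = smult s (smult r x)"
  by (simp only: sm_mult[symmetric] mult.commute)

lemma sub_sum:
  assumes "submod smult W" "\<forall>i<(k::nat). x i \<in> W"
  shows "(\<Sum>i<k. smult (c i) (x i)) \<in> W"
  using assms(2)
proof (induction k)
  case 0 then show ?case using assms(1) by (simp add: submod_def)
next
  case (Suc k)
  then have "smult (c k) (x k) + (\<Sum>i<k. smult (c i) (x i)) \<in> W"
    using assms(1) unfolding submod_def by simp
  then show ?case by (simp add: add.commute)
qed

lemma lin_zero:
  assumes "linear_on smult W \<phi>" "0 \<in> W"
  shows "\<phi> 0 = 0"
proof -
  have "\<phi> (smult 1 0 + 0) = 1 * \<phi> 0 + \<phi> 0" using assms unfolding linear_on_def by blast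
  then show ?thesis by (intro self_add0) (simp only: sm_one add_0_right mult_1)
qed

lemma lin_sum:
  assumes "submod smult W" "linear_on smult W \<phi>" "\<forall>i<(k::nat). x i \<in> W"
  shows "\<phi> (\<Sum>i<k. smult (c i) (x i)) = (\<Sum>i<k. c i * \<phi> (x i))"
  using assms(3)
proof (induction k)
  case 0 then show ?case using assms lin_zero by (simp add: submod_def)
next
  case (Suc k)
  have s: "(\<Sum>i<k. smult (c i) (x i)) \<in> W" using Suc.prems by (intro sub_sum assms(1)) simp
  have "\<phi> (\<Sum>i<Suc k. smult (c i) (x i)) = \<phi> (smult (c k) (x k) + (\<Sum>i<k. smult (c i) (x i)))"
    by (simp add: add.commute)
  also have "\<dots> = c k * \<phi> (x k) + \<phi> (\<Sum>i<k. smult (c i) (x i))"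
    using assms(2) s Suc.prems unfolding linear_on_def by simp
  finally show ?case using Suc by (simp add: add.commute)
qed

lemma linmap_zero:
  assumes "linmap smult W T" "0 \<in> W"
  shows "T 0 = 0"
proof -
  have "T (smult 1 0 + 0) = smult 1 (T 0) + T 0" using assms unfolding linmap_def by blast
  then show ?thesis by (intro self_add0) (simp only: sm_one add_0_right)
qed

lemma map_sum:
  assumes "submod smult W" "linmap smult W T" "\<forall>i<(k::nat). x i \<in> W"
  shows "T (\<Sum>i<k. smult (c i) (x i)) = (\<Sum>i<k. smult (c i) (T (x i)))"
  using assms(3)
proof (induction k)
  case 0 then show ?case using assms linmap_zero by (simp add: submod_def)
next
  case (Suc k)
  have s: "(\<Sum>i<k. smult (c i) (x i)) \<in> W" using Suc.prems by (intro sub_sum assms(1)) simp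
  have "T (\<Sum>i<Suc k. smult (c i) (x i)) = T (smult (c k) (x k) + (\<Sum>i<k. smult (c i) (x i)))"
    by (simp add: add.commute)
  also have "\<dots> = smult (c k) (T (x k)) + T (\<Sum>i<k. smult (c i) (x i))"
    using assms(2) s Suc.prems unfolding linmap_def by simp
  finally show ?case using Suc by (simp add: add.commute)
qed

lemma trace_indep:
  assumes W: "submod smult W" and b1: "dual_basis smult W n e \<phi>" and b2: "dual_basis smult W m f \<psi>"
    and T: "linmap smult W T" "\<forall>x\<in>W. T x \<in> W"
  shows "(\<Sum>i<n. \<phi> i (T (e i))) = (\<Sum>j<m. \<psi> j (T (f j)))"
proof -
  have e: "\<forall>i<n. e i \<in> W" "\<forall>i<n. linear_on smult W (\<phi> i)" "\<forall>x\<in>W. x = (\<Sum>i<n. smult (\<phi> i x) (e i))"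
    using b1 unfolding dual_basis_def by auto
  have f: "\<forall>i<m. f i \<in> W" "\<forall>i<m. linear_on smult W (\<psi> i)" "\<forall>x\<in>W. x = (\<Sum>i<m. smult (\<psi> i x) (f i))"
    using b2 unfolding dual_basis_def by auto
  have 1: "\<phi> i (T (e i)) = (\<Sum>j<m. \<psi> j (T (e i)) * \<phi> i (f j))" if i: "i < n" for i
  proof -
    have "T (e i) \<in> W" using i e T by auto
    then have "T (e i) = (\<Sum>j<m. smult (\<psi> j (T (e i))) (f j))" by (rule f(3)[rule_format])
    then have "\<phi> i (T (e i)) = \<phi> i (\<Sum>j<m. smult (\<psi> j (T (e i))) (f j))" by (rule arg_cong)
    also have "\<dots> = (\<Sum>j<m. \<psi> j (T (e i)) * \<phi> i (f j))"
      by (rule lin_sum[OF W]) (use e(1,2) f(1,2) i in auto)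
    finally show ?thesis .
  qed
  have 2: "\<psi> j (T (f j)) = (\<Sum>i<n. \<phi> i (f j) * \<psi> j (T (e i)))" if j: "j < m" for j
  proof -
    have "f j \<in> W" using f(1) j by blast
    then have "f j = (\<Sum>i<n. smult (\<phi> i (f j)) (e i))" by (rule e(3)[rule_format])
    then have "T (f j) = T (\<Sum>i<n. smult (\<phi> i (f j)) (e i))" by (rule arg_cong)
    also have "\<dots> = (\<Sum>i<n. smult (\<phi> i (f j)) (T (e i)))"
      by (rule map_sum[OF W T(1)]) (use e(1,2) in auto)
    finally have "\<psi> j (T (f j)) = \<psi> j (\<Sum>i<n. smult (\<phi> i (f j)) (T (e i)))" by simp
    also have "\<dots> = (\<Sum>i<n. \<phi> i (f j) * \<psi> j (T (e i)))"
      by (rule lin_sum[OF W]) (use e(1,2) f(1,2) j T in auto)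
    finally show ?thesis .
  qed
  have "(\<Sum>i<n. \<phi> i (T (e i))) = (\<Sum>i<n. \<Sum>j<m. \<psi> j (T (e i)) * \<phi> i (f j))"
    using 1 by (intro sum.cong) auto
  also have "\<dots> = (\<Sum>j<m. \<Sum>i<n. \<phi> i (f j) * \<psi> j (T (e i)))"
    by (subst sum.swap) (simp add: mult.commute)
  also have "\<dots> = (\<Sum>j<m. \<psi> j (T (f j)))" using 2 by simp
  finally show ?thesis .
qed

lemma mtrace_eq:
  assumes W: "submod smult W" and b1: "dual_basis smult W n e \<phi>"
    and T: "linmap smult W T" "\<forall>x\<in>W. T x \<in> W"
  shows "mtrace smult W T = (\<Sum>i<n. \<phi> i (T (e i)))"
proof -
  obtain n' e' \<phi>' where X: "(SOME (n, e, \<phi>). dual_basis smult W n e \<phi>) = (n', e', \<phi>')"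
    by (cases "(SOME (n, e, \<phi>). dual_basis smult W n e \<phi>)") auto
  have ex: "\<exists>x. (\<lambda>(n, e, \<phi>). dual_basis smult W n e \<phi>) x"
    using b1 by auto
  have "(\<lambda>(n, e, \<phi>). dual_basis smult W n e \<phi>) (SOME x. (\<lambda>(n, e, \<phi>). dual_basis smult W n e \<phi>) x)"
    by (rule someI_ex[OF ex])
  then have b2: "dual_basis smult W n' e' \<phi>'" using X by simp
  have "mtrace smult W T = (\<Sum>i<n'. \<phi>' i (T (e' i)))"
    unfolding mtrace_def X by simp
  also have "\<dots> = (\<Sum>i<n. \<phi> i (T (e i)))"
    by (rule trace_indep[OF W b2 b1 T])
  finally show ?thesis .
qed

end


lemma half_r: "(of_real (1/2) :: 'r::real_algebra_1) + of_real (1/2) = 1"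
  by (simp flip: of_real_add)

lemma half_r0: "(p::'r::{comm_ring_1,real_algebra_1}) + p = 0 \<Longrightarrow> p = 0"
proof -
  assume a: "p + p = 0"
  have "(of_real (1/2) + of_real (1/2)) * p = of_real (1/2) * (p + p)"
    by (simp add: algebra_simps)
  then show ?thesis using a by (simp add: half_r)
qed

locale CA = md smult for smult :: "'r::{comm_ring_1,real_algebra_1} \<Rightarrow> 'e::ab_group_add \<Rightarrow> 'e" +
  fixes anchor :: "'e \<Rightarrow> 'r \<Rightarrow> 'r"
    and pair :: "'e \<Rightarrow> 'e \<Rightarrow> 'r"
    and br :: "'e \<Rightarrow> 'e \<Rightarrow> 'e"
    and G :: "'e \<Rightarrow> 'e"
    and D :: "'e \<Rightarrow> 'e \<Rightarrow> 'e"
  assumes ca: "courant_algebroid smult anchor pair br"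
    and gm: "generalized_metric smult pair G"
    and gc: "generalized_connection smult anchor pair D"
    and cp: "compatible G D"
begin

abbreviation "rsd f \<equiv> rho_star_d anchor pair f"
abbreviation "h \<equiv> (of_real (1/2) :: 'r)"
abbreviation "P x \<equiv> ppart smult G x"
abbreviation "M x \<equiv> mpart smult G x"
abbreviation "R x y c \<equiv> naive_curv br D x y c"

lemma an_lin: "anchor (smult r a + b) f = r * anchor a f + anchor b f"
  using ca[unfolded courant_algebroid_def] by meson

lemma an_add: "anchor a (f + g) = anchor a f + anchor a g"
  using ca[unfolded courant_algebroid_def] by meson

lemma an_mult: "anchor a (f * g) = f * anchor a g + g * anchor a f"
  using ca[unfolded courant_algebroid_def] by meson

lemma pr_sym: "pair a b = pair b a"
  using ca[unfolded courant_algebroid_def] by meson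

lemma pr_lin: "pair (smult r a + b) c = r * pair a c + pair b c"
  using ca[unfolded courant_algebroid_def] by meson

lemma nondeg: "(\<forall>b. pair a b = 0) \<Longrightarrow> a = 0"
  using ca[unfolded courant_algebroid_def] by meson

lemma dual_ex: "linear_on smult UNIV \<phi> \<Longrightarrow> (\<exists>a. \<forall>b. pair a b = \<phi> b)"
  using ca[unfolded courant_algebroid_def] by meson

lemma br_addr: "br a (b + c) = br a b + br a c"
  using ca[unfolded courant_algebroid_def] by meson

lemma br_addl: "br (a + b) c = br a c + br b c"
  using ca[unfolded courant_algebroid_def] by meson

lemma inv: "anchor a (pair b c) = pair (br a b) c + pair b (br a c)"
  using ca[unfolded courant_algebroid_def] by meson

lemma br_self: "br a a + br a a = rsd (pair a a)"
  using ca[unfolded courant_algebroid_def] by meson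

lemma basis_ex: "\<exists>n e \<phi>. dual_basis smult UNIV n e \<phi>"
  using ca unfolding courant_algebroid_def by blast

lemma D_lin1: "D (smult r b + b') a = smult r (D b a) + D b' a"
  using gc[unfolded generalized_connection_def] by meson

lemma D_add2: "D b (a + a') = D b a + D b a'"
  using gc[unfolded generalized_connection_def] by meson

lemma D_leib0: "D b (smult f a) = smult f (D b a) + smult (pair (rsd f) b) a"
  using gc[unfolded generalized_connection_def] by meson

lemma G_lin: "G (smult r a + b) = smult r (G a) + G b"
  using gm[unfolded generalized_metric_def] by meson

lemma G_sym: "pair (G a) b = pair a (G b)"
  using gm[unfolded generalized_metric_def] by meson

lemma G_inv: "G (G a) = a"
  using gm[unfolded generalized_metric_def] by meson

lemma cp_p: "b \<in> Vplus G \<Longrightarrow> D a b \<in> Vplus G"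
  using cp[unfolded compatible_def] by meson

lemma cp_m: "b \<in> Vminus G \<Longrightarrow> D a b \<in> Vminus G"
  using cp[unfolded compatible_def] by meson

lemma pr_add_l: "pair (a + b) c = pair a c + pair b c"
  using pr_lin[of 1 a b c] by simp

lemma pr_zero_l[simp]: "pair 0 c = 0"
  using pr_add_l[of 0 0 c] by (intro self_add0) simp

lemma pr_smult_l: "pair (smult r a) c = r * pair a c"
  using pr_lin[of r a 0 c] by simp

lemma sm_neg1: "smult (-1) a = - a"
  by (simp add: sm_uminus_l)

lemma pr_minus_l: "pair (- a) c = - pair a c"
  using pr_smult_l[of "-1" a c] by (simp add: sm_neg1)

lemma pr_diff_l: "pair (a - b) c = pair a c - pair b c"
  by (simp add: diff_conv_add_uminus pr_add_l pr_minus_l del: add_uminus_conv_diff)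

lemma pr_add_r: "pair c (a + b) = pair c a + pair c b"
  by (metis pr_sym pr_add_l)

lemma pr_smult_r: "pair c (smult r a) = r * pair c a"
  by (metis pr_sym pr_smult_l)

lemma pr_minus_r: "pair c (- a) = - pair c a"
  by (metis pr_sym pr_minus_l)

lemma eq_pair: "(\<And>y. pair u y = pair v y) \<Longrightarrow> u = v"
proof -
  assume a: "\<And>y. pair u y = pair v y"
  have "u - v = 0" by (rule nondeg) (simp add: pr_diff_l a)
  then show ?thesis by simp
qed

lemma rsd_char: "pair (rsd f) y = anchor y f"
proof -
  have lin: "linear_on smult UNIV (\<lambda>b. anchor b f)"
    unfolding linear_on_def by (simp add: an_lin)
  obtain a where a: "\<forall>b. pair a b = anchor b f" using dual_ex[OF lin] by blast
  have "\<forall>b. pair (THE x. \<forall>y. pair x y = anchor y f) b = anchor b f"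
  proof (rule theI[of "\<lambda>x. \<forall>y. pair x y = anchor y f" a])
    show "\<forall>y. pair a y = anchor y f" by (rule a)
    fix x assume "\<forall>y. pair x y = anchor y f"
    then show "x = a" using a by (intro eq_pair) simp
  qed
  then show ?thesis unfolding rho_star_d_def by blast
qed

lemma an_zero: "anchor a 0 = 0"
  using an_add[of a 0 0] by (intro self_add0) simp

lemma rsd_add: "rsd (f + g) = rsd f + rsd g"
  by (rule eq_pair) (simp add: rsd_char pr_add_l an_add)

lemma rsd_zero: "rsd 0 = 0"
  by (rule eq_pair) (simp add: rsd_char an_zero)

lemma br_leib: "br a (smult r c) = smult r (br a c) + smult (anchor a r) c"
proof (rule eq_pair)
  fix y
  have i1: "pair (br a (smult r c)) y = anchor a (pair (smult r c) y) - pair (smult r c) (br a y)"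
    using inv[of a "smult r c" y] by (simp add: algebra_simps)
  have i2: "pair (br a c) y = anchor a (pair c y) - pair c (br a y)"
    using inv[of a c y] by (simp add: algebra_simps)
  show "pair (br a (smult r c)) y = pair (smult r (br a c) + smult (anchor a r) c) y"
    unfolding i1 pr_add_l pr_smult_l i2 an_mult by (simp add: algebra_simps)
qed

lemma halve_e: "x + x = y + (y::'e) \<Longrightarrow> x = y"
proof -
  have hx: "smult h (z + z) = z" for z
    by (simp only: sm_add sm_addl[symmetric] half_r sm_one)
  assume a: "x + x = y + y"
  have "x = smult h (x + x)" by (simp only: hx)
  also have "\<dots> = smult h (y + y)" by (simp only: a)
  also have "\<dots> = y" by (simp only: hx)
  finally show ?thesis .
qed

lemma br_zero_l: "br 0 a = 0"
  using br_addl[of 0 0 a] by (intro self_add0) simp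

lemma br_sym: "br a b + br b a = rsd (pair a b)"
proof (rule halve_e)
  have e1: "br (a+b) (a+b) + br (a+b) (a+b) = rsd (pair (a+b) (a+b))" by (rule br_self)
  have x1: "br (a+b) (a+b) = br a a + br a b + (br b a + br b b)"
    by (simp add: br_addl br_addr)
  have x2: "rsd (pair (a+b) (a+b)) = rsd (pair a a) + rsd (pair b b) + (rsd (pair a b) + rsd (pair a b))"
  proof -
    have "pair (a+b) (a+b) = pair a a + pair b b + (pair a b + pair a b)"
      by (simp add: pr_add_l pr_add_r pr_sym[of b a] add_ac)
    then show ?thesis by (simp only: rsd_add)
  qed
  have "(br a a + br a a) + (br b b + br b b) + ((br a b + br b a) + (br a b + br b a))
      = (br a a + br a a) + (br b b + br b b) + (rsd (pair a b) + rsd (pair a b))"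
    using e1 unfolding x1 x2 br_self[of a, symmetric] br_self[of b, symmetric]
    by (simp add: algebra_simps)
  then show "br a b + br b a + (br a b + br b a) = rsd (pair a b) + rsd (pair a b)"
    by simp
qed

lemma br_smult_l:
  assumes "pair c a = 0"
  shows "br (smult r c) a = smult r (br c a) - smult (anchor a r) c"
proof -
  have 1: "br (smult r c) a = rsd (pair (smult r c) a) - br a (smult r c)"
    using br_sym[of "smult r c" a] by (simp add: algebra_simps)
  have 2: "br c a = - br a c"
    using br_sym[of c a] assms by (simp add: rsd_zero eq_neg_iff_add_eq_0)
  show ?thesis unfolding 1 2 br_leib pr_smult_l assms
    by (simp add: rsd_zero sm_minus)
qed

end


context CA begin

lemma D_add1: "D (b + b') a = D b a + D b' a"
  using D_lin1[of 1 b b' a] by simp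

lemma D_zero1: "D 0 a = 0"
  using D_add1[of 0 0 a] by (intro self_add0) simp

lemma D_smult1: "D (smult r b) a = smult r (D b a)"
  using D_lin1[of r b 0 a] by (simp add: D_zero1)

lemma D_minus1: "D (- b) a = - D b a"
  using D_smult1[of "-1" b a] by (simp add: sm_neg1)

lemma D_diff1: "D (b - b') a = D b a - D b' a"
  by (simp add: diff_conv_add_uminus D_add1 D_minus1 del: add_uminus_conv_diff)

lemma D_zero2: "D b 0 = 0"
  using D_add2[of b 0 0] by (intro self_add0) simp

lemma D_minus2: "D b (- a) = - D b a"
proof -
  have "D b (a + - a) = D b a + D b (- a)" by (rule D_add2)
  then have "D b a + D b (- a) = 0" by (simp add: D_zero2)
  then show ?thesis by (metis add.commute eq_neg_iff_add_eq_0)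
qed

lemma D_diff2: "D b (a - a') = D b a - D b a'"
  by (simp add: diff_conv_add_uminus D_add2 D_minus2 del: add_uminus_conv_diff)

lemma D_leib: "D b (smult f a) = smult f (D b a) + smult (anchor b f) a"
  by (simp add: D_leib0 rsd_char)

lemma R_lin1:
  assumes "pair c a = 0"
  shows "R (smult r c + x) a b = smult r (R c a b) + R x a b"
proof -
  have t1: "D (smult r c + x) (D a b) = smult r (D c (D a b)) + D x (D a b)" by (rule D_lin1)
  have t2: "D a (D (smult r c + x) b) = smult r (D a (D c b)) + smult (anchor a r) (D c b) + D a (D x b)"
    by (simp add: D_lin1 D_add2 D_leib)
  have t3: "br (smult r c + x) a = smult r (br c a) - smult (anchor a r) c + br x a"
    by (simp add: br_addl br_smult_l assms)
  have t4: "D (br (smult r c + x) a) b = smult r (D (br c a) b) - smult (anchor a r) (D c b) + D (br x a) b"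
    unfolding t3 by (simp add: D_add1 D_diff1 D_smult1)
  show ?thesis unfolding naive_curv_def t1 t2 t4
    by (simp add: sm_diff sm_add algebra_simps)
qed

lemma R_add3: "R x y (b + b') = R x y b + R x y b'"
  unfolding naive_curv_def by (simp add: D_add2 algebra_simps)

lemma R_zero1: "R 0 y b = 0"
  unfolding naive_curv_def by (simp add: D_zero1 D_zero2 br_zero_l)

lemma G_add: "G (a + b) = G a + G b"
  using G_lin[of 1 a b] by simp

lemma G_zero: "G 0 = 0"
  using G_add[of 0 0] by (intro self_add0) simp

lemma G_smult: "G (smult r a) = smult r (G a)"
  using G_lin[of r a 0] by (simp add: G_zero)

lemma G_minus: "G (- a) = - G a"
  using G_smult[of "-1" a] by (simp add: sm_neg1)

lemma G_diff: "G (a - b) = G a - G b"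
  by (simp add: diff_conv_add_uminus G_add G_minus del: add_uminus_conv_diff)

lemma vp_iff: "x \<in> Vplus G \<longleftrightarrow> G x = x"
  by (simp add: Vplus_def)

lemma vm_iff: "x \<in> Vminus G \<longleftrightarrow> G x = - x"
  by (simp add: Vminus_def)

lemma R_vp: "x \<in> Vplus G \<Longrightarrow> R u v x \<in> Vplus G"
proof -
  assume x: "x \<in> Vplus G"
  have a: "G (D u (D v x)) = D u (D v x)" "G (D v (D u x)) = D v (D u x)" "G (D (br u v) x) = D (br u v) x"
    using cp_p[OF cp_p[OF x]] cp_p[OF x] by (simp_all add: vp_iff)
  show ?thesis unfolding naive_curv_def vp_iff G_diff a ..
qed

lemma R_vm: "x \<in> Vminus G \<Longrightarrow> R u v x \<in> Vminus G"
proof -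
  assume x: "x \<in> Vminus G"
  have a: "G (D u (D v x)) = - D u (D v x)" "G (D v (D u x)) = - D v (D u x)" "G (D (br u v) x) = - D (br u v) x"
    using cp_m[OF cp_m[OF x]] cp_m[OF x] by (simp_all add: vm_iff)
  show ?thesis unfolding naive_curv_def vm_iff G_diff a by simp
qed

lemma hx: "smult h (z + z) = z"
  by (simp only: sm_add sm_addl[symmetric] half_r sm_one)

lemma P_in: "P x \<in> Vplus G"
  unfolding vp_iff ppart_def G_smult G_add G_inv by (simp add: add.commute)

lemma M_in: "M x \<in> Vminus G"
  unfolding vm_iff mpart_def G_smult G_diff G_inv by (simp add: sm_minus[symmetric])

lemma P_M: "P x + M x = x"
  unfolding ppart_def mpart_def sm_add[symmetric] by (simp add: hx)

lemma P_vp: "x \<in> Vplus G \<Longrightarrow> P x = x"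
  unfolding ppart_def vp_iff by (simp add: hx)

lemma M_vp: "x \<in> Vplus G \<Longrightarrow> M x = 0"
  unfolding mpart_def vp_iff by simp

lemma P_vm: "x \<in> Vminus G \<Longrightarrow> P x = 0"
  unfolding ppart_def vm_iff by simp

lemma M_vm: "x \<in> Vminus G \<Longrightarrow> M x = x"
  unfolding mpart_def vm_iff by (simp add: hx)

lemma P_lin: "P (smult r x + y) = smult r (P x) + P y"
proof -
  have eq: "smult r x + y + G (smult r x + y) = smult r (x + G x) + (y + G y)"
    by (simp add: G_add G_smult sm_add algebra_simps)
  show ?thesis unfolding ppart_def by (simp only: eq sm_add sm_comm[of h r])
qed

lemma M_lin: "M (smult r x + y) = smult r (M x) + M y"
proof -
  have eq: "smult r x + y - G (smult r x + y) = smult r (x - G x) + (y - G y)"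
    by (simp add: G_add G_smult sm_diff algebra_simps)
  show ?thesis unfolding mpart_def by (simp only: eq sm_add sm_comm[of h r])
qed

lemma P_add: "P (x + y) = P x + P y"
  using P_lin[of 1 x y] by simp

lemma M_add: "M (x + y) = M x + M y"
  using M_lin[of 1 x y] by simp

lemma pair_pm: "x \<in> Vplus G \<Longrightarrow> y \<in> Vminus G \<Longrightarrow> pair x y = 0"
proof -
  assume x: "x \<in> Vplus G" and y: "y \<in> Vminus G"
  have "pair x y = pair (G x) y" using x by (simp add: vp_iff)
  also have "\<dots> = pair x (G y)" by (rule G_sym)
  also have "\<dots> = - pair x y" using y by (simp add: vm_iff pr_minus_r)
  finally have e: "pair x y = - pair x y" .
  have "pair x y + pair x y = pair x y + - pair x y"
    using e by (rule arg_cong[where f="\<lambda>z. pair x y + z"])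
  then have "pair x y + pair x y = 0" by (simp only: add.right_inverse)
  then show ?thesis by (rule half_r0)
qed

lemma pair_mp: "x \<in> Vminus G \<Longrightarrow> y \<in> Vplus G \<Longrightarrow> pair x y = 0"
  using pair_pm pr_sym by metis

lemma PR: "P (R u v b) = R u v (P b)"
proof -
  have "R u v b = R u v (P b) + R u v (M b)" by (simp only: P_M R_add3[symmetric])
  then have "P (R u v b) = P (R u v (P b)) + P (R u v (M b))" by (simp only: P_add)
  then show ?thesis using P_vp[OF R_vp[OF P_in]] P_vm[OF R_vm[OF M_in]] by simp
qed

lemma MR: "M (R u v b) = R u v (M b)"
proof -
  have "R u v b = R u v (P b) + R u v (M b)" by (simp only: P_M R_add3[symmetric])
  then have "M (R u v b) = M (R u v (P b)) + M (R u v (M b))" by (simp only: M_add)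
  then show ?thesis using M_vp[OF R_vp[OF P_in]] M_vm[OF R_vm[OF M_in]] by simp
qed

end


context CA begin

lemma submod_UNIV: "submod smult UNIV"
  by (simp add: submod_def)

lemma submod_vp: "submod smult (Vplus G)"
  unfolding submod_def vp_iff by (simp add: G_zero G_lin)

lemma submod_vm: "submod smult (Vminus G)"
  unfolding submod_def vm_iff by (simp add: G_zero G_lin sm_minus)

lemma linmap_P: "linmap smult UNIV (\<lambda>x. P x)"
  unfolding linmap_def by (simp add: P_lin)

lemma linmap_M: "linmap smult UNIV (\<lambda>x. M x)"
  unfolding linmap_def by (simp add: M_lin)

lemma main:
  "total_ric smult br G D a b = ric_GF_plus smult br G D (M a) (P b) + ric_GF_minus smult br G D (P a) (M b)"
proof -
  obtain n e \<phi> where db: "dual_basis smult UNIV n e \<phi>" using basis_ex by blast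
  have e3: "x = (\<Sum>i<n. smult (\<phi> i x) (e i))" for x using db unfolding dual_basis_def by blast
  have \<phi>lin: "i < n \<Longrightarrow> linear_on smult UNIV (\<phi> i)" for i using db unfolding dual_basis_def by blast
  define ep where "ep i = P (e i)" for i
  define em where "em i = M (e i)" for i
  have Pe: "P x = (\<Sum>i<n. smult (\<phi> i x) (ep i))" for x
  proof -
    have "P x = P (\<Sum>i<n. smult (\<phi> i x) (e i))" using e3[of x] by (rule arg_cong)
    also have "\<dots> = (\<Sum>i<n. smult (\<phi> i x) (ep i))" unfolding ep_def
      by (rule map_sum[OF submod_UNIV linmap_P, of n e]) simp
    finally show ?thesis .
  qed
  have Me: "M x = (\<Sum>i<n. smult (\<phi> i x) (em i))" for x
  proof -
    have "M x = M (\<Sum>i<n. smult (\<phi> i x) (e i))" using e3[of x] by (rule arg_cong)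
    also have "\<dots> = (\<Sum>i<n. smult (\<phi> i x) (em i))" unfolding em_def
      by (rule map_sum[OF submod_UNIV linmap_M, of n e]) simp
    finally show ?thesis .
  qed
  have dbp: "dual_basis smult (Vplus G) n ep \<phi>"
    unfolding dual_basis_def
  proof (intro conjI allI impI ballI)
    show "ep i \<in> Vplus G" for i unfolding ep_def by (rule P_in)
    show "linear_on smult (Vplus G) (\<phi> i)" if "i < n" for i
      using \<phi>lin[OF that] unfolding linear_on_def by blast
    show "x = (\<Sum>i<n. smult (\<phi> i x) (ep i))" if "x \<in> Vplus G" for x
      using Pe[of x] P_vp[OF that] by simp
  qed
  have dbm: "dual_basis smult (Vminus G) n em \<phi>"
    unfolding dual_basis_def
  proof (intro conjI allI impI ballI)
    show "em i \<in> Vminus G" for i unfolding em_def by (rule M_in)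
    show "linear_on smult (Vminus G) (\<phi> i)" if "i < n" for i
      using \<phi>lin[OF that] unfolding linear_on_def by blast
    show "x = (\<Sum>i<n. smult (\<phi> i x) (em i))" if "x \<in> Vminus G" for x
      using Me[of x] M_vm[OF that] by simp
  qed
  define f where "f i = (if i < n then ep i else em (i - n))" for i
  define \<psi> where "\<psi> i x = (if i < n then \<phi> i (P x) else \<phi> (i - n) (M x))" for i x
  have split: "(\<Sum>i<n+n. g i) = (\<Sum>i<n. g i) + (\<Sum>i<n. g (n+i))" for g :: "nat \<Rightarrow> 'a::comm_monoid_add"
    by (rule sum_split_add)
  have dbE: "dual_basis smult UNIV (n+n) f \<psi>"
    unfolding dual_basis_def
  proof (intro conjI allI impI ballI)
    show "f i \<in> UNIV" for i by simp
    show "linear_on smult UNIV (\<psi> i)" if "i < n + n" for i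
    proof (cases "i < n")
      case True
      then show ?thesis using \<phi>lin[OF True] unfolding linear_on_def \<psi>_def by (simp add: P_lin)
    next
      case False
      then have "i - n < n" using that by simp
      then show ?thesis using \<phi>lin[of "i - n"] False unfolding linear_on_def \<psi>_def by (simp add: M_lin)
    qed
    show "x = (\<Sum>i<n+n. smult (\<psi> i x) (f i))" for x
    proof -
      have "(\<Sum>i<n+n. smult (\<psi> i x) (f i)) = (\<Sum>i<n. smult (\<phi> i (P x)) (ep i)) + (\<Sum>i<n. smult (\<phi> i (M x)) (em i))"
        unfolding split by (simp add: \<psi>_def f_def)
      also have "\<dots> = P x + M x"
        using dbp dbm P_in[of x] M_in[of x] unfolding dual_basis_def by metis
      finally show ?thesis by (simp add: P_M)
    qed
  qed
  define T where "T c = total_curv smult br G D c a b" for c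
  have linT: "linmap smult UNIV T"
    unfolding linmap_def T_def total_curv_def
  proof (intro allI impI)
    fix r x y
    have 1: "pair (P x) (M a) = 0" by (rule pair_pm[OF P_in M_in])
    have 2: "pair (M x) (P a) = 0" by (rule pair_mp[OF M_in P_in])
    show "R (P (smult r x + y)) (M a) b + R (M (smult r x + y)) (P a) b =
          smult r (R (P x) (M a) b + R (M x) (P a) b) + (R (P y) (M a) b + R (M y) (P a) b)"
      unfolding P_lin M_lin R_lin1[OF 1] R_lin1[OF 2] sm_add by (simp add: algebra_simps)
  qed
  have lhs: "total_ric smult br G D a b = (\<Sum>i<n. \<phi> i (R (ep i) (M a) (P b))) + (\<Sum>i<n. \<phi> i (R (em i) (P a) (M b)))"
  proof -
    have "total_ric smult br G D a b = (\<Sum>i<n+n. \<psi> i (T (f i)))"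
      unfolding total_ric_def T_def[symmetric]
      by (rule mtrace_eq[OF submod_UNIV dbE linT]) simp
    also have "\<dots> = (\<Sum>i<n. \<phi> i (P (T (ep i)))) + (\<Sum>i<n. \<phi> i (M (T (em i))))"
      unfolding split by (simp add: \<psi>_def f_def)
    also have "\<dots> = (\<Sum>i<n. \<phi> i (R (ep i) (M a) (P b))) + (\<Sum>i<n. \<phi> i (R (em i) (P a) (M b)))"
    proof -
      have "T (ep i) = R (ep i) (M a) b" for i
        unfolding T_def total_curv_def ep_def P_vp[OF P_in] M_vp[OF P_in] by (simp add: R_zero1)
      moreover have "T (em i) = R (em i) (P a) b" for i
        unfolding T_def total_curv_def em_def P_vm[OF M_in] M_vm[OF M_in] by (simp add: R_zero1)
      ultimately show ?thesis by (simp add: PR MR)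
    qed
    finally show ?thesis .
  qed
  have rp: "ric_GF_plus smult br G D (M a) (P b) = (\<Sum>i<n. \<phi> i (R (ep i) (M a) (P b)))"
    unfolding ric_GF_plus_def
  proof (rule mtrace_eq[OF submod_vp dbp])
    show "linmap smult (Vplus G) (\<lambda>c. R c (M a) (P b))"
      unfolding linmap_def using R_lin1 pair_pm[OF _ M_in] by blast
    show "\<forall>x\<in>Vplus G. R x (M a) (P b) \<in> Vplus G" using R_vp[OF P_in] by blast
  qed
  have rm: "ric_GF_minus smult br G D (P a) (M b) = (\<Sum>i<n. \<phi> i (R (em i) (P a) (M b)))"
    unfolding ric_GF_minus_def
  proof (rule mtrace_eq[OF submod_vm dbm])
    show "linmap smult (Vminus G) (\<lambda>c. R c (P a) (M b))"
      unfolding linmap_def using R_lin1 pair_mp[OF _ P_in] by blast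
    show "\<forall>x\<in>Vminus G. R x (P a) (M b) \<in> Vminus G" using R_vm[OF M_in] by blast
  qed
  show ?thesis unfolding lhs rp rm ..
qed

end

theorem lemma4p3:
  fixes smult :: "'r::{comm_ring_1,real_algebra_1} \<Rightarrow> 'e::ab_group_add \<Rightarrow> 'e"
    and anchor :: "'e \<Rightarrow> 'r \<Rightarrow> 'r"
    and pair :: "'e \<Rightarrow> 'e \<Rightarrow> 'r"
    and br :: "'e \<Rightarrow> 'e \<Rightarrow> 'e"
    and G :: "'e \<Rightarrow> 'e"
    and D :: "'e \<Rightarrow> 'e \<Rightarrow> 'e"
  assumes "courant_algebroid smult anchor pair br"
    and "generalized_metric smult pair G"
    and "generalized_connection smult anchor pair D"
    and "compatible G D"
  shows "total_ric smult br G D a b =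
           ric_GF_plus smult br G D (mpart smult G a) (ppart smult G b) +
           ric_GF_minus smult br G D (ppart smult G a) (mpart smult G b)"
proof -
  have m: "module_ax smult" using assms(1) unfolding courant_algebroid_def by meson
  have "CA smult anchor pair br G D"
    unfolding CA_def CA_axioms_def md_def using m assms by blast
  then show ?thesis by (rule CA.main)
qed

end
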